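(* Let $K$ be a $d$-dimensional convex body with $o\in\mathrm{int}(K)$, let $\delta>0$, and let $\{v_i+\lambda_iK: i\in I\}$ be a pairwise intersecting family of positive homothets of $K$ such that $v_i\notin v_j+\lambda_j\,\mathrm{int}(K)$ for all distinct $i,j\in I$, and $\lambda_i\in[1,1+\delta)$ for each $i\in I$. Then $|I|\le P(K,2(1+\delta))$.
   Context: A convex body is a compact convex set with non-empty interior. For a convex body $L$ with $o\in\mathrm{int}(L)$, $\|x\|_L=\inf\{\mu>0:x\in\mu L\}$. $P(K,\lambda)$ is the maximum number of points $p_1,\dots,p_m$ such that $\max_{i<j}\|p_i-p_j\|_{\frac12(K-K)}\big/\min_{i<j}\|p_i-p_j\|_{K\cap-K}\le\lambda$. *)

theory Defs
  imports "HOL-Analysis.Analysis" "HOL-Library.Extended_Nat"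
begin

definition convex_body :: "'a::euclidean_space set \<Rightarrow> bool" where
  "convex_body K \<longleftrightarrow> compact K \<and> convex K \<and> interior K \<noteq> {}"

definition gauge_norm :: "'a::euclidean_space set \<Rightarrow> 'a \<Rightarrow> real" where
  "gauge_norm L x = Inf {\<mu>::real. \<mu> > 0 \<and> x \<in> (\<lambda>y. \<mu> *\<^sub>R y) ` L}"

definition half_diff_body :: "'a::euclidean_space set \<Rightarrow> 'a set" where
  "half_diff_body K = {(1/2) *\<^sub>R (a - b) | a b. a \<in> K \<and> b \<in> K}"

definition sym_body :: "'a::euclidean_space set \<Rightarrow> 'a set" where
  "sym_body K = K \<inter> uminus ` K"

definition ratio_ok :: "'a::euclidean_space set \<Rightarrow> real \<Rightarrow> 'a set \<Rightarrow> bool" where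
  "ratio_ok K lam S \<longleftrightarrow>
     (card S \<ge> 2 \<longrightarrow>
       Max {gauge_norm (half_diff_body K) (p - q) | p q. p \<in> S \<and> q \<in> S \<and> p \<noteq> q}
       / Min {gauge_norm (sym_body K) (p - q) | p q. p \<in> S \<and> q \<in> S \<and> p \<noteq> q} \<le> lam)"

definition P_num :: "'a::euclidean_space set \<Rightarrow> real \<Rightarrow> enat" where
  "P_num K lam = Sup {enat (card S) | S. finite S \<and> ratio_ok K lam S}"

definition homothet :: "'a::euclidean_space \<Rightarrow> real \<Rightarrow> 'a set \<Rightarrow> 'a set" where
  "homothet v t K = (\<lambda>x. v + t *\<^sub>R x) ` K"

end

theory Submission
  imports Defs
begin

lemma shrink_int:
  fixes K :: "'a::euclidean_space set"
  assumes "convex K" "0 \<in> interior K" "0 < t" "t < 1" "k \<in> K"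
  shows "t *\<^sub>R k \<in> interior K"
proof -
  have "k - (1 - t) *\<^sub>R (k - 0) \<in> interior K"
    by (rule mem_interior_convex_shrink) (use assms in auto)
  then show ?thesis by (simp add: algebra_simps)
qed

lemma scale_mem:
  fixes K :: "'a::euclidean_space set"
  assumes "convex K" "0 \<in> K" "0 \<le> t" "t \<le> 1" "k \<in> K"
  shows "t *\<^sub>R k \<in> K"
proof -
  have "t *\<^sub>R k + (1 - t) *\<^sub>R 0 \<in> K"
    by (rule convexD) (use assms in auto)
  then show ?thesis by simp
qed

lemma gauge_ge1:
  fixes K :: "'a::euclidean_space set"
  assumes "convex K" "0 \<in> interior K" "l \<ge> 1"
    and nx: "x \<notin> (\<lambda>y. l *\<^sub>R y) ` interior K"
  shows "gauge_norm (sym_body K) x \<ge> 1"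
  unfolding gauge_norm_def
proof (rule cInf_greatest)
  obtain e where e: "e > 0" "ball 0 e \<subseteq> K"
    using assms(2) mem_interior by blast
  define \<mu> where "\<mu> = (norm x + 1) * 2 / e"
  have mu: "\<mu> > 0" using e unfolding \<mu>_def by (intro divide_pos_pos mult_pos_pos) (auto simp: add_nonneg_pos)
  define y where "y = (1/\<mu>) *\<^sub>R x"
  have "norm y = norm x * e / (2 * (norm x + 1))"
    using mu e by (simp add: y_def \<mu>_def algebra_simps)
  also have "\<dots> < e"
  proof -
    have p: "0 < 2 * (norm x + 1)" by (simp add: add_nonneg_pos)
    have "0 \<le> e * norm x" using e by simp
    moreover have "e * (2 * (norm x + 1)) = norm x * e + (e * norm x + 2 * e)" by (simp add: algebra_simps)
    ultimately have "norm x * e < e * (2 * (norm x + 1))" using e by linarith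
    then show ?thesis using p by (simp add: pos_divide_less_eq)
  qed
  finally have ny: "norm y < e" .
  have yK: "y \<in> K" using ny e by auto
  have "-y \<in> K" using ny e by auto
  hence "y \<in> uminus ` K" by force
  hence "y \<in> sym_body K" using yK by (simp add: sym_body_def)
  moreover have "x = \<mu> *\<^sub>R y" using mu by (simp add: y_def)
  ultimately show "{\<mu>. 0 < \<mu> \<and> x \<in> (\<lambda>y. \<mu> *\<^sub>R y) ` sym_body K} \<noteq> {}"
    using mu by blast
next
  fix \<mu> assume "\<mu> \<in> {\<mu>. 0 < \<mu> \<and> x \<in> (\<lambda>y. \<mu> *\<^sub>R y) ` sym_body K}"
  then obtain y where mu: "\<mu> > 0" and y: "y \<in> K" and xy: "x = \<mu> *\<^sub>R y"
    by (auto simp: sym_body_def)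
  show "1 \<le> \<mu>"
  proof (rule ccontr)
    assume "\<not> 1 \<le> \<mu>"
    hence "(\<mu>/l) *\<^sub>R y \<in> interior K"
      using assms mu y by (intro shrink_int) (auto simp: field_simps)
    moreover have "x = l *\<^sub>R ((\<mu>/l) *\<^sub>R y)" using xy assms(3) by simp
    ultimately show False using nx by blast
  qed
qed

lemma gauge_le:
  fixes K :: "'a::euclidean_space set"
  assumes "c > 0" "x = c *\<^sub>R ((1/2) *\<^sub>R (a - b))" "a \<in> K" "b \<in> K"
  shows "gauge_norm (half_diff_body K) x \<le> c"
  unfolding gauge_norm_def
proof (rule cInf_lower)
  show "c \<in> {\<mu>. 0 < \<mu> \<and> x \<in> (\<lambda>y. \<mu> *\<^sub>R y) ` half_diff_body K}"
  proof -
    have "(1/2) *\<^sub>R (a - b) \<in> half_diff_body K" using assms by (auto simp: half_diff_body_def)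
    then show ?thesis using assms(1,2) by blast
  qed
  show "bdd_below {\<mu>. 0 < \<mu> \<and> x \<in> (\<lambda>y. \<mu> *\<^sub>R y) ` half_diff_body K}"
    by (rule bdd_belowI[where m=0]) auto
qed


lemma ratio_aux:
  fixes a b C :: real
  assumes "a \<le> C" "b \<ge> 1" "C \<ge> 0"
  shows "a / b \<le> C"
proof (cases "a \<ge> 0")
  case True
  have "a / b \<le> a" using True assms(2) by (simp add: divide_le_eq mult_le_cancel_left1 mult_le_cancel_left)
  then show ?thesis using assms(1) by linarith
next
  case False
  then have "a / b \<le> 0" using assms(2) by (simp add: divide_nonpos_pos)
  then show ?thesis using assms(3) by linarith
qed

theorem lemma19:
  fixes K :: "'a::euclidean_space set"
    and I :: "'i set"
    and v :: "'i \<Rightarrow> 'a"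
    and lam :: "'i \<Rightarrow> real"
    and \<delta> :: real
  assumes "convex_body K"
    and "0 \<in> interior K"
    and "\<delta> > 0"
    and "\<forall>i\<in>I. \<forall>j\<in>I. homothet (v i) (lam i) K \<inter> homothet (v j) (lam j) K \<noteq> {}"
    and "\<forall>i\<in>I. \<forall>j\<in>I. i \<noteq> j \<longrightarrow> v i \<notin> homothet (v j) (lam j) (interior K)"
    and "\<forall>i\<in>I. 1 \<le> lam i \<and> lam i < 1 + \<delta>"
  shows "\<forall>J\<subseteq>I. finite J \<longrightarrow> enat (card J) \<le> P_num K (2 * (1 + \<delta>))"
proof (intro allI impI)
  fix J assume JI: "J \<subseteq> I" and fJ: "finite J"
  have cvx: "convex K" using assms(1) by (simp add: convex_body_def)
  have K0: "0 \<in> K" using assms(2) interior_subset by blast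
  define C where "C = 2 * (1 + \<delta>)"
  have C0: "C > 0" using assms(3) by (simp add: C_def)
  have lower: "gauge_norm (sym_body K) (v i - v j) \<ge> 1"
    if "i \<in> I" "j \<in> I" "i \<noteq> j" for i j
  proof (rule gauge_ge1[OF cvx assms(2)])
    show "1 \<le> lam j" using assms(6) that by blast
    show "v i - v j \<notin> (\<lambda>y. lam j *\<^sub>R y) ` interior K"
    proof
      assume "v i - v j \<in> (\<lambda>y. lam j *\<^sub>R y) ` interior K"
      then obtain y where "y \<in> interior K" "v i - v j = lam j *\<^sub>R y" by blast
      then have "v i \<in> homothet (v j) (lam j) (interior K)"
        unfolding homothet_def by (auto intro!: image_eqI[where x=y] simp: algebra_simps)
      then show False using assms(5) that by blast
    qed
  qed
  have upper: "gauge_norm (half_diff_body K) (v i - v j) \<le> C"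
    if "i \<in> I" "j \<in> I" for i j
  proof -
    have ne: "homothet (v i) (lam i) K \<inter> homothet (v j) (lam j) K \<noteq> {}"
      using assms(4) that by simp
    obtain z where "z \<in> homothet (v i) (lam i) K" "z \<in> homothet (v j) (lam j) K"
      using ne by blast
    then obtain a b where a: "a \<in> K" and b: "b \<in> K" and za: "z = v i + lam i *\<^sub>R a" and zb: "z = v j + lam j *\<^sub>R b"
      unfolding homothet_def by blast
    have eq: "v i + lam i *\<^sub>R a = v j + lam j *\<^sub>R b" using za zb by metis
    have li: "1 \<le> lam i \<and> lam i < 1 + \<delta>" and lj: "1 \<le> lam j \<and> lam j < 1 + \<delta>"
      using assms(6) that by auto
    define a' where "a' = (lam j / (1 + \<delta>)) *\<^sub>R b"
    define b' where "b' = (lam i / (1 + \<delta>)) *\<^sub>R a"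
    have d: "0 < 1 + \<delta>" using assms(3) by simp
    have a'K: "a' \<in> K" unfolding a'_def
    proof (rule scale_mem[OF cvx K0 _ _ b])
      show "0 \<le> lam j / (1 + \<delta>)" using lj d by simp
      show "lam j / (1 + \<delta>) \<le> 1" using lj d by simp
    qed
    have b'K: "b' \<in> K" unfolding b'_def
    proof (rule scale_mem[OF cvx K0 _ _ a])
      show "0 \<le> lam i / (1 + \<delta>)" using li d by simp
      show "lam i / (1 + \<delta>) \<le> 1" using li d by simp
    qed
    have "v i - v j = lam j *\<^sub>R b - lam i *\<^sub>R a" using eq by (simp add: algebra_simps)
    also have "\<dots> = C *\<^sub>R ((1/2) *\<^sub>R (a' - b'))"
    proof -
      have "C *\<^sub>R ((1/2) *\<^sub>R (a' - b')) = (1 + \<delta>) *\<^sub>R a' - (1 + \<delta>) *\<^sub>R b'"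
      proof -
        have h: "C * (1/2) = 1 + \<delta>" by (simp add: C_def)
        have "C *\<^sub>R ((1/2) *\<^sub>R (a' - b')) = (C * (1/2)) *\<^sub>R (a' - b')" by (simp only: scaleR_scaleR)
        then show ?thesis by (simp only: h scaleR_diff_right)
      qed
      also have "(1 + \<delta>) *\<^sub>R a' = lam j *\<^sub>R b" using d by (simp add: a'_def)
      also have "(1 + \<delta>) *\<^sub>R b' = lam i *\<^sub>R a" using d by (simp add: b'_def)
      finally show ?thesis by simp
    qed
    finally show ?thesis by (rule gauge_le[OF C0 _ a'K b'K])
  qed
  define S where "S = v ` J"
  have inj: "inj_on v J"
  proof (rule inj_onI, rule ccontr)
    fix i j assume ij: "i \<in> J" "j \<in> J" "v i = v j" "i \<noteq> j"
    have "v i \<in> homothet (v j) (lam j) (interior K)"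
      unfolding homothet_def using ij(3) assms(2) by (auto intro!: image_eqI[where x=0])
    then show False using assms(5) ij JI by blast
  qed
  have cardS: "card S = card J" unfolding S_def using inj by (simp add: card_image)
  have fS: "finite S" unfolding S_def using fJ by simp
  have ok: "ratio_ok K C S"
    unfolding ratio_ok_def
  proof
    assume c2: "2 \<le> card S"
    define A where "A = {gauge_norm (half_diff_body K) (p - q) |p q. p \<in> S \<and> q \<in> S \<and> p \<noteq> q}"
    define B where "B = {gauge_norm (sym_body K) (p - q) |p q. p \<in> S \<and> q \<in> S \<and> p \<noteq> q}"
    obtain p q where pq: "p \<in> S" "q \<in> S" "p \<noteq> q"
    proof -
      have "S \<noteq> {}" using c2 by auto
      then obtain p where p: "p \<in> S" by blast
      have "card (S - {p}) = card S - 1" using p fS by simp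
      then have "card (S - {p}) \<ge> 1" using c2 by linarith
      then have "S - {p} \<noteq> {}" by (metis card.empty not_one_le_zero)
      then obtain q where "q \<in> S - {p}" by blast
      then show ?thesis using that p by blast
    qed
    have fA: "finite A"
    proof -
      have "A \<subseteq> (\<lambda>(p,q). gauge_norm (half_diff_body K) (p - q)) ` (S \<times> S)"
        unfolding A_def by auto
      then show ?thesis using fS finite_subset by blast
    qed
    have fB: "finite B"
    proof -
      have "B \<subseteq> (\<lambda>(p,q). gauge_norm (sym_body K) (p - q)) ` (S \<times> S)"
        unfolding B_def by auto
      then show ?thesis using fS finite_subset by blast
    qed
    have neA: "A \<noteq> {}" unfolding A_def using pq by blast
    have neB: "B \<noteq> {}" unfolding B_def using pq by blast
    have "Max A \<le> C"
      unfolding Max_le_iff[OF fA neA]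
    proof
      fix x assume "x \<in> A"
      then obtain p q where "p \<in> S" "q \<in> S" and x: "x = gauge_norm (half_diff_body K) (p - q)"
        unfolding A_def by blast
      then obtain i j where "i \<in> J" "j \<in> J" "p = v i" "q = v j"
        unfolding S_def by blast
      then show "x \<le> C" using upper[of i j] JI x by auto
    qed
    moreover have "1 \<le> Min B"
      unfolding Min_ge_iff[OF fB neB]
    proof
      fix x assume "x \<in> B"
      then obtain p q where "p \<in> S" "q \<in> S" "p \<noteq> q" and x: "x = gauge_norm (sym_body K) (p - q)"
        unfolding B_def by blast
      then obtain i j where "i \<in> J" "j \<in> J" "p = v i" "q = v j" "i \<noteq> j"
        unfolding S_def by blast
      then show "1 \<le> x" using lower[of i j] JI x by auto
    qed
    ultimately show "Max A / Min B \<le> C" using ratio_aux C0 by simp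
  qed
  have "enat (card S) \<le> P_num K C"
    unfolding P_num_def using fS ok by (intro Sup_upper) blast
  then show "enat (card J) \<le> P_num K (2 * (1 + \<delta>))" using cardS by (simp add: C_def)
qed

end
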